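(* Let $\alpha,\beta,p,q\in\mathbb{C}$ be constants with $p^2\neq q^2$, and set $s^2=\alpha^2-p^2$, $\mu^2=\alpha^2-q^2$, $t^2=\beta^2-p^2$, $\nu^2=\beta^2-q^2$. Let $h,g:\mathbb{Z}^2\to\mathbb{C}$ satisfy $\widehat{h}-\widetilde{h}=\widetilde{\widetilde{g}}-g$ and $(h+\widetilde g)g=\beta^2-\alpha^2$. Let $\varphi_1,\varphi_2$ be two linearly independent solutions of $$\widetilde{\widetilde{\varphi}}+h\,\widetilde{\varphi}+\alpha^2\varphi=p^2\varphi,\qquad \widehat{\varphi}=\widetilde{\varphi}-g\,\varphi,$$ and $\phi_1,\phi_2$ two linearly independent solutions of $$\widetilde{\widetilde{\phi}}+h\,\widetilde{\phi}+\alpha^2\phi=q^2\phi,\qquad \widehat{\phi}=\widetilde{\phi}-g\,\phi .$$ Let $\rho_1,\rho_2$ be the constants with $\varphi_1\widetilde\varphi_2-\varphi_2\widetilde\varphi_1=\rho_1 s^{2n}t^{2m}$ and $\phi_1\widetilde\phi_2-\phi_2\widetilde\phi_1=\rho_2\mu^{2n}\nu^{2m}$. Let $M=\begin{pmatrix}A&B\\C&D\end{pmatrix}$ be a constant matrix, $\langle\Phi_p|=(\varphi_1\ \ \varphi_2)$, $|\Phi_q\rangle=(\phi_1\ \ \phi_2)^{\intercal}$, and $$Y=\langle\Phi_p|M|\widetilde{\Phi}_q\rangle-\langle\widetilde{\Phi}_p|M|\Phi_q\rangle=\sum_{i,j=1}^2 M_{ij}\big(\varphi_i\widetilde{\phi}_j-\phi_j\widetilde{\varphi}_i\big).$$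 Then $Y$ satisfies the leKdV-II$(\delta)$ equation $$s^2\mu^2Y\widehat{Y}+\widetilde{Y}\widehat{\widetilde{Y}}-t^2\nu^2Y\widetilde{Y}-\widehat{Y}\widehat{\widetilde{Y}}=(\alpha^2-\beta^2)\Big(Y\widehat{\widetilde{Y}}+\widetilde{Y}\widehat{Y}+\delta\,(p^2-q^2)^2s^{2n}\mu^{2n}t^{2m}\nu^{2m}\Big)$$ with $\delta=\rho_1\rho_2\det M$.
   Context: Shift notation: for a function $f$ on $\mathbb{Z}^2$ (variables $n,m$), $\widetilde f(n,m)=f(n+1,m)$, $\widehat f(n,m)=f(n,m+1)$, and combined accents denote composed shifts; accents on vectors act componentwise. $M_{11}=A$, $M_{12}=B$, $M_{21}=C$, $M_{22}=D$. *)

theory Defs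
  imports Complex_Main
begin

(* Lattice functions on Z^2: f n m.  tilde shift: n+1, hat shift: m+1. *)

definition lin_indep2 :: "(int \<Rightarrow> int \<Rightarrow> complex) \<Rightarrow> (int \<Rightarrow> int \<Rightarrow> complex) \<Rightarrow> bool" where
  "lin_indep2 f1 f2 \<longleftrightarrow>
     (\<forall>c1 c2. (\<forall>n m. c1 * f1 n m + c2 * f2 n m = 0) \<longrightarrow> c1 = 0 \<and> c2 = 0)"

definition lax_sol :: "complex \<Rightarrow> complex \<Rightarrow> (int \<Rightarrow> int \<Rightarrow> complex) \<Rightarrow> (int \<Rightarrow> int \<Rightarrow> complex)
     \<Rightarrow> (int \<Rightarrow> int \<Rightarrow> complex) \<Rightarrow> bool" where
  "lax_sol \<alpha> k h g \<phi> \<longleftrightarrow>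
     (\<forall>n m. \<phi> (n+2) m + h n m * \<phi> (n+1) m + \<alpha>^2 * \<phi> n m = k^2 * \<phi> n m
          \<and> \<phi> n (m+1) = \<phi> (n+1) m - g n m * \<phi> n m)"

definition Yfun :: "complex \<Rightarrow> complex \<Rightarrow> complex \<Rightarrow> complex \<Rightarrow>
     (int \<Rightarrow> int \<Rightarrow> complex) \<Rightarrow> (int \<Rightarrow> int \<Rightarrow> complex) \<Rightarrow>
     (int \<Rightarrow> int \<Rightarrow> complex) \<Rightarrow> (int \<Rightarrow> int \<Rightarrow> complex) \<Rightarrow> int \<Rightarrow> int \<Rightarrow> complex" where
  "Yfun A B C D \<phi>1 \<phi>2 \<psi>1 \<psi>2 n m =
     A * (\<phi>1 n m * \<psi>1 (n+1) m - \<psi>1 n m * \<phi>1 (n+1) m)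
   + B * (\<phi>1 n m * \<psi>2 (n+1) m - \<psi>2 n m * \<phi>1 (n+1) m)
   + C * (\<phi>2 n m * \<psi>1 (n+1) m - \<psi>1 n m * \<phi>2 (n+1) m)
   + D * (\<phi>2 n m * \<psi>2 (n+1) m - \<psi>2 n m * \<phi>2 (n+1) m)"

end

theory Submission
  imports Defs
begin

lemma key_alg:
  fixes Q1 Q2 P Pp g H s2 mu2 e :: complex
  shows "let Y = Q1-Q2; T=s2*Q1-mu2*Q2; Yh=T+(mu2-s2)*g*P+e*Y; Z=s2*mu2*Y+(mu2-s2)*H*Pp+e*T in
   s2*mu2*Y*Yh+T*Z-(s2+e)*(mu2+e)*Y*T-Yh*Z - (-e*(Y*Z+T*Yh+(P*Pp-Q1*Q2)*(mu2-s2)^2)) = - ((mu2-s2)^2*P*Pp*(g*H-e))"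
  unfolding Let_def by algebra

lemma shifts:
  assumes "lax_sol \<alpha> k h g f"
  shows "f (n+2) m = k^2 * f n m - h n m * f (n+1) m - \<alpha>^2 * f n m"
    and "f n (m+1) = f (n+1) m - g n m * f n m"
    and "f (n+1) (m+1) = f (n+2) m - g (n+1) m * f (n+1) m"
    and "f (n+2) (m+1) = k^2 * f n (m+1) - h n (m+1) * f (n+1) (m+1) - \<alpha>^2 * f n (m+1)"
proof -
  have L: "\<And>n m. f (n+2) m + h n m * f (n+1) m + \<alpha>^2 * f n m = k^2 * f n m"
   and R: "\<And>n m. f n (m+1) = f (n+1) m - g n m * f n m"
    using assms unfolding lax_sol_def by auto
  show "f (n+2) m = k^2 * f n m - h n m * f (n+1) m - \<alpha>^2 * f n m"
    using L[of n m] by (simp add: algebra_simps)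
  show "f n (m+1) = f (n+1) m - g n m * f n m" by (rule R)
  show "f (n+1) (m+1) = f (n+2) m - g (n+1) m * f (n+1) m"
    using R[of "n+1" m] by (simp add: add.assoc)
  show "f (n+2) (m+1) = k^2 * f n (m+1) - h n (m+1) * f (n+1) (m+1) - \<alpha>^2 * f n (m+1)"
    using L[of n "m+1"] by (simp add: algebra_simps)
qed

theorem proposition4p2:
  fixes \<alpha> \<beta> p q \<rho>1 \<rho>2 A B C D :: complex
    and h g \<phi>1 \<phi>2 \<psi>1 \<psi>2 :: "int \<Rightarrow> int \<Rightarrow> complex"
  assumes pq: "p^2 \<noteq> q^2"
    and hg1: "\<forall>n m. h n (m+1) - h (n+1) m = g (n+2) m - g n m"
    and hg2: "\<forall>n m. (h n m + g (n+1) m) * g n m = \<beta>^2 - \<alpha>^2"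
    and sol1: "lax_sol \<alpha> p h g \<phi>1" and sol2: "lax_sol \<alpha> p h g \<phi>2"
    and li1: "lin_indep2 \<phi>1 \<phi>2"
    and sol3: "lax_sol \<alpha> q h g \<psi>1" and sol4: "lax_sol \<alpha> q h g \<psi>2"
    and li2: "lin_indep2 \<psi>1 \<psi>2"
    and W1: "\<forall>n m. \<phi>1 n m * \<phi>2 (n+1) m - \<phi>2 n m * \<phi>1 (n+1) m
               = \<rho>1 * (\<alpha>^2 - p^2) powi n * (\<beta>^2 - p^2) powi m"
    and W2: "\<forall>n m. \<psi>1 n m * \<psi>2 (n+1) m - \<psi>2 n m * \<psi>1 (n+1) m
               = \<rho>2 * (\<alpha>^2 - q^2) powi n * (\<beta>^2 - q^2) powi m"
  shows "\<forall>n m.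
    (let Y = Yfun A B C D \<phi>1 \<phi>2 \<psi>1 \<psi>2;
         s2 = \<alpha>^2 - p^2; \<mu>2 = \<alpha>^2 - q^2; t2 = \<beta>^2 - p^2; \<nu>2 = \<beta>^2 - q^2;
         \<delta> = \<rho>1 * \<rho>2 * (A * D - B * C)
     in s2 * \<mu>2 * Y n m * Y n (m+1) + Y (n+1) m * Y (n+1) (m+1)
        - t2 * \<nu>2 * Y n m * Y (n+1) m - Y n (m+1) * Y (n+1) (m+1)
      = (\<alpha>^2 - \<beta>^2) * (Y n m * Y (n+1) (m+1) + Y (n+1) m * Y n (m+1)
          + \<delta> * (p^2 - q^2)^2 * s2 powi n * \<mu>2 powi n * t2 powi m * \<nu>2 powi m))"
proof (intro allI)
  fix n m :: int
  define Y where "Y = Yfun A B C D \<phi>1 \<phi>2 \<psi>1 \<psi>2"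
  define s2 where "s2 = \<alpha>^2 - p^2"
  define mu2 where "mu2 = \<alpha>^2 - q^2"
  define e where "e = \<beta>^2 - \<alpha>^2"
  define gg where "gg = g n m"
  define H where "H = h n m + g (n+1) m"
  define x1 where "x1 = \<phi>1 n m"
  define x2 where "x2 = \<phi>2 n m"
  define x1' where "x1' = \<phi>1 (n+1) m"
  define x2' where "x2' = \<phi>2 (n+1) m"
  define y1 where "y1 = \<psi>1 n m"
  define y2 where "y2 = \<psi>2 n m"
  define y1' where "y1' = \<psi>1 (n+1) m"
  define y2' where "y2' = \<psi>2 (n+1) m"
  define Q1 where "Q1 = A*x1*y1' + B*x1*y2' + C*x2*y1' + D*x2*y2'"
  define Q2 where "Q2 = A*x1'*y1 + B*x1'*y2 + C*x2'*y1 + D*x2'*y2"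
  define P where "P = A*x1*y1 + B*x1*y2 + C*x2*y1 + D*x2*y2"
  define Pp where "Pp = A*x1'*y1' + B*x1'*y2' + C*x2'*y1' + D*x2'*y2'"
  have gH: "gg * H = e" using hg2 unfolding gg_def H_def e_def by (simp add: mult.commute)
  note S1 = shifts[OF sol1, of n m] and S2 = shifts[OF sol2, of n m]
   and S3 = shifts[OF sol3, of n m] and S4 = shifts[OF sol4, of n m]
  have nn: "n + 1 + 1 = n + 2" by simp
  have Y0: "Y n m = Q1 - Q2"
    unfolding Y_def Yfun_def Q1_def Q2_def x1_def x2_def x1'_def x2'_def y1_def y2_def y1'_def y2'_def
    by (simp add: algebra_simps)
  have Y1: "Y (n+1) m = s2*Q1 - mu2*Q2"
    unfolding Y_def Yfun_def nn S1(1) S2(1) S3(1) S4(1)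
    unfolding Q1_def Q2_def x1_def x2_def x1'_def x2'_def y1_def y2_def y1'_def y2'_def s2_def mu2_def
    by (simp add: algebra_simps)
  have Y2: "Y n (m+1) = (s2*Q1 - mu2*Q2) + (mu2-s2)*gg*P + gg*H*(Q1-Q2)"
    unfolding Y_def Yfun_def S1(2,3) S2(2,3) S3(2,3) S4(2,3) S1(1) S2(1) S3(1) S4(1)
    unfolding Q1_def Q2_def P_def x1_def x2_def x1'_def x2'_def y1_def y2_def y1'_def y2'_def s2_def mu2_def gg_def H_def
    by (simp add: algebra_simps)
  have Y3: "Y (n+1) (m+1) = s2*mu2*(Q1-Q2) + (mu2-s2)*H*Pp + gg*H*(s2*Q1 - mu2*Q2)"
    unfolding Y_def Yfun_def nn S1(4) S2(4) S3(4) S4(4)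
    unfolding S1(2,3) S2(2,3) S3(2,3) S4(2,3) S1(1) S2(1) S3(1) S4(1)
    unfolding Q1_def Q2_def Pp_def x1_def x2_def x1'_def x2'_def y1_def y2_def y1'_def y2'_def s2_def mu2_def gg_def H_def
    by (simp add: algebra_simps)
  have Wd: "P*Pp - Q1*Q2 = (A*D - B*C) * ((x1*x2' - x2*x1') * (y1*y2' - y2*y1'))"
    unfolding P_def Pp_def Q1_def Q2_def by algebra
  have Wv: "(x1*x2' - x2*x1') * (y1*y2' - y2*y1') = \<rho>1 * \<rho>2 * s2 powi n * mu2 powi n * (\<beta>^2 - p^2) powi m * (\<beta>^2 - q^2) powi m"
    unfolding x1_def x2_def x1'_def x2'_def y1_def y2_def y1'_def y2'_def s2_def mu2_def
    unfolding W1[rule_format] W2[rule_format] by (simp add: algebra_simps)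
  have K: "s2*mu2*Y n m*Y n (m+1) + Y (n+1) m*Y (n+1) (m+1) - (s2+e)*(mu2+e)*Y n m*Y (n+1) m - Y n (m+1)*Y (n+1) (m+1)
       - (-e*(Y n m*Y (n+1) (m+1) + Y (n+1) m*Y n (m+1) + (P*Pp-Q1*Q2)*(mu2-s2)^2)) = 0"
    using key_alg[of Q1 Q2 s2 mu2 gg P e H Pp] gH unfolding Y0 Y1 Y2 Y3 Let_def by simp
  have t2: "\<beta>^2 - p^2 = s2 + e" and nu2: "\<beta>^2 - q^2 = mu2 + e" and ab: "\<alpha>^2 - \<beta>^2 = -e"
    and pq2: "(p^2 - q^2) = mu2 - s2"
    unfolding s2_def mu2_def e_def by simp_all
  have dl: "\<rho>1 * \<rho>2 * (A * D - B * C) * (p^2 - q^2)^2 * s2 powi n * mu2 powi n * (\<beta>^2 - p^2) powi m * (\<beta>^2 - q^2) powi m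
     = (P*Pp-Q1*Q2)*(mu2-s2)^2"
    unfolding Wd Wv pq2 by (simp add: algebra_simps)
  show "let Y = Yfun A B C D \<phi>1 \<phi>2 \<psi>1 \<psi>2;
         s2 = \<alpha>^2 - p^2; \<mu>2 = \<alpha>^2 - q^2; t2 = \<beta>^2 - p^2; \<nu>2 = \<beta>^2 - q^2;
         \<delta> = \<rho>1 * \<rho>2 * (A * D - B * C)
     in s2 * \<mu>2 * Y n m * Y n (m+1) + Y (n+1) m * Y (n+1) (m+1)
        - t2 * \<nu>2 * Y n m * Y (n+1) m - Y n (m+1) * Y (n+1) (m+1)
      = (\<alpha>^2 - \<beta>^2) * (Y n m * Y (n+1) (m+1) + Y (n+1) m * Y n (m+1)
          + \<delta> * (p^2 - q^2)^2 * s2 powi n * \<mu>2 powi n * t2 powi m * \<nu>2 powi m)"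
    unfolding Let_def Y_def[symmetric] s2_def[symmetric] mu2_def[symmetric] dl ab
    unfolding t2 nu2
    using K by (simp add: algebra_simps)
qed

end
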